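(* Let $H,H^{(p)}$ ($p\in\mathbb N$) be coding functions and let $r,r_p\in(0,\infty)$ with $r<\Gamma(H)$ and $r_p<\Gamma(H^{(p)})$ for each $p$. Assume: (i) $\{s\ge0:H_s=\Gamma(H)\}=\{S(H)\}$; (ii) $H_s>\Gamma(H)-r$ for all $s\in(\sigma^-_r(H),\sigma^+_r(H))$; (iii) $H^{(p)}\to H$ uniformly on compacts, $\zeta(H^{(p)})\to\zeta(H)$ and $r_p\to r$. Then $S(H^{(p)})\to S(H)$, $\sigma^-_{r_p}(H^{(p)})\to\sigma^-_r(H)$, $\sigma^+_{r_p}(H^{(p)})\to\sigma^+_r(H)$; moreover $\Theta_{r_p}(H^{(p)})\to\Theta_r(H)$ uniformly on compacts and $\zeta(\Theta_{r_p}(H^{(p)}))\to\zeta(\Theta_r(H))$.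
   Context: A coding function is a continuous $H:\mathbb R_+\to\mathbb R_+$ with compact support, $H_0=0$, not identically zero. $\zeta(H)=\sup\{t:H_t>0\}$, $\Gamma(H)=\sup H$, $S(H)=\inf\{t\ge0:H_t=\Gamma(H)\}$. For $r\in(0,\Gamma(H))$: $\sigma^-_r(H)=\sup\{t\in[0,S(H)]:H_t<\Gamma(H)-r\}$, $\sigma^+_r(H)=\inf\{t\ge S(H):H_t<\Gamma(H)-r\}$, and $\Theta_r(H)(t)=H\big((\sigma^-_r(H)+t)\wedge\sigma^+_r(H)\big)-\Gamma(H)+r$ for $t\ge0$. *)

theory Defs
  imports "HOL-Analysis.Analysis"
begin

text \<open>Functions on R_+ are modelled as real \<Rightarrow> real; only values at t \<ge> 0 matter.\<close>

definition coding_function :: "(real \<Rightarrow> real) \<Rightarrow> bool" where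
  "coding_function H \<longleftrightarrow>
     continuous_on {0..} H \<and> (\<forall>t\<ge>0. H t \<ge> 0) \<and> H 0 = 0 \<and>
     compact (closure {t\<in>{0..}. H t \<noteq> 0}) \<and> (\<exists>t\<ge>0. H t \<noteq> 0)"

definition zeta :: "(real \<Rightarrow> real) \<Rightarrow> real" where
  "zeta H = Sup {t. t \<ge> 0 \<and> H t > 0}"

definition Gamma_max :: "(real \<Rightarrow> real) \<Rightarrow> real" where
  "Gamma_max H = Sup (H ` {0..})"

definition S_arg :: "(real \<Rightarrow> real) \<Rightarrow> real" where
  "S_arg H = Inf {t. t \<ge> 0 \<and> H t = Gamma_max H}"

definition sigma_minus :: "real \<Rightarrow> (real \<Rightarrow> real) \<Rightarrow> real" where
  "sigma_minus r H = Sup {t \<in> {0..S_arg H}. H t < Gamma_max H - r}"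

definition sigma_plus :: "real \<Rightarrow> (real \<Rightarrow> real) \<Rightarrow> real" where
  "sigma_plus r H = Inf {t. t \<ge> S_arg H \<and> H t < Gamma_max H - r}"

definition Theta :: "real \<Rightarrow> (real \<Rightarrow> real) \<Rightarrow> real \<Rightarrow> real" where
  "Theta r H t = H (min (sigma_minus r H + t) (sigma_plus r H)) - Gamma_max H + r"

end

theory Submission
  imports Defs
begin


lemma gap_lemma:
  fixes g :: "real \<Rightarrow> real"
  assumes "compact K" "continuous_on K g" "\<forall>x\<in>K. g x > c"
  shows "\<exists>\<delta>>0. \<forall>x\<in>K. g x \<ge> c + \<delta>"
proof (cases "K = {}")
  case True then show ?thesis by (intro exI[of _ 1]) auto
next
  case False
  then obtain x0 where x0: "x0 \<in> K" "\<forall>y\<in>K. g x0 \<le> g y"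
    using continuous_attains_inf[OF assms(1) False assms(2)] by blast
  show ?thesis
    by (rule exI[of _ "g x0 - c"]) (use x0 assms(3) in auto)
qed

lemma cont_above:
  fixes f :: "real \<Rightarrow> real"
  assumes "continuous_on {0..} f" "x \<ge> 0" "f x > c"
  shows "\<exists>\<delta>>0. \<forall>t\<ge>0. \<bar>t - x\<bar> < \<delta> \<longrightarrow> f t > c"
proof -
  have "x \<in> {0..}" using assms(2) by simp
  moreover have "f x - c > 0" using assms(3) by simp
  ultimately obtain d where d: "d > 0" "\<forall>x'\<in>{0..}. dist x' x < d \<longrightarrow> dist (f x') (f x) < f x - c"
    using assms(1) unfolding continuous_on_iff by blast
  have "\<forall>t\<ge>0. \<bar>t - x\<bar> < d \<longrightarrow> f t > c"
  proof (intro allI impI)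
    fix t :: real assume t: "t \<ge> 0" "\<bar>t - x\<bar> < d"
    then have "dist (f t) (f x) < f x - c" using d(2) by (simp add: dist_real_def)
    then show "f t > c" by (simp add: dist_real_def abs_less_iff)
  qed
  then show ?thesis using d(1) by blast
qed

lemma tendsto_from_bounds:
  fixes x :: "nat \<Rightarrow> real"
  assumes "\<And>e. e > 0 \<Longrightarrow> eventually (\<lambda>p. l - e < x p) sequentially"
    and "\<And>e. e > 0 \<Longrightarrow> eventually (\<lambda>p. x p < l + e) sequentially"
  shows "x \<longlonglongrightarrow> l"
  unfolding tendsto_iff dist_real_def
proof (intro allI impI)
  fix e :: real assume "e > 0"
  from eventually_conj[OF assms(1)[OF this] assms(2)[OF this]]
  show "eventually (\<lambda>p. \<bar>x p - l\<bar> < e) sequentially" by eventually_elim arith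
qed

context
  fixes f :: "real \<Rightarrow> real"
  assumes cf: "coding_function f"
begin

lemma cf_cont: "continuous_on {0..} f" and cf_nonneg: "\<And>t. t \<ge> 0 \<Longrightarrow> f t \<ge> 0"
  and cf_0: "f 0 = 0"
  using cf unfolding coding_function_def by auto

lemma cf_pos_ex: "\<exists>t\<ge>0. f t > 0"
  proof -
  obtain t where "t \<ge> 0" "f t \<noteq> 0" using cf unfolding coding_function_def by blast
  moreover have "f t \<ge> 0" using cf \<open>t \<ge> 0\<close> unfolding coding_function_def by blast
  ultimately show ?thesis by (intro exI[of _ t]) simp
qed

lemma cf_bdd: "bdd_above {t. t \<ge> 0 \<and> f t > 0}"
proof -
  have "{t. t \<ge> 0 \<and> f t > 0} \<subseteq> closure {t\<in>{0..}. f t \<noteq> 0}"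
    using closure_subset by fastforce
  moreover have "bounded (closure {t\<in>{0..}. f t \<noteq> 0})"
    using cf unfolding coding_function_def by (auto intro: compact_imp_bounded)
  ultimately show ?thesis
    by (meson bounded_imp_bdd_above bdd_above_mono)
qed

lemma cf_zeta_upper: "t \<ge> 0 \<Longrightarrow> f t > 0 \<Longrightarrow> t \<le> zeta f"
  unfolding zeta_def by (rule cSup_upper) (use cf_bdd in auto)

lemma cf_zeta_pos: "zeta f > 0"
proof -
  obtain t where t: "t \<ge> 0" "f t > 0" using cf_pos_ex by blast
  have "t \<noteq> 0" using t cf_0 by auto
  then show ?thesis using cf_zeta_upper[OF t] t by linarith
qed

lemma cf_zero_beyond: "t > zeta f \<Longrightarrow> f t = 0"
  using cf_zeta_upper[of t] cf_nonneg[of t] cf_zeta_pos by force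

lemma cf_Gamma_ex: "\<exists>m. 0 \<le> m \<and> m \<le> zeta f \<and> f m = Gamma_max f \<and> (\<forall>t\<ge>0. f t \<le> f m)"
proof -
  have ne: "{0..zeta f} \<noteq> {}" using cf_zeta_pos by auto
  obtain m where m: "m \<in> {0..zeta f}" "\<forall>y\<in>{0..zeta f}. f y \<le> f m"
    using continuous_attains_sup[OF compact_Icc ne continuous_on_subset[OF cf_cont]] by auto
  have all: "\<forall>t\<ge>0. f t \<le> f m"
  proof (intro allI impI)
    fix t :: real assume "t \<ge> 0"
    show "f t \<le> f m"
    proof (cases "t \<le> zeta f")
      case True then show ?thesis using m \<open>t\<ge>0\<close> by auto
    next
      case False then show ?thesis using cf_zero_beyond[of t] cf_nonneg[of m] m by auto
    qed
  qed
  have "Gamma_max f = f m" unfolding Gamma_max_def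
    by (rule cSup_eq_maximum) (use m all in auto)
  then show ?thesis using m all by auto
qed

lemma cf_Gamma_upper: "t \<ge> 0 \<Longrightarrow> f t \<le> Gamma_max f"
  using cf_Gamma_ex by auto

lemma cf_Gamma_pos: "Gamma_max f > 0"
  using cf_pos_ex cf_Gamma_upper by fastforce

lemma cf_S: "f (S_arg f) = Gamma_max f" "0 \<le> S_arg f" "S_arg f \<le> zeta f"
proof -
  let ?A = "{t. t \<ge> 0 \<and> f t = Gamma_max f}"
  have ne: "?A \<noteq> {}" using cf_Gamma_ex by auto
  have "?A = {0..} \<inter> f -` {Gamma_max f}" by auto
  then have cl: "closed ?A" using continuous_closed_preimage[OF cf_cont] by auto
  have "Inf ?A \<in> ?A" by (rule closed_contains_Inf[OF ne _ cl]) (auto simp: bdd_below_def)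
  then show a: "f (S_arg f) = Gamma_max f" and b: "0 \<le> S_arg f" unfolding S_arg_def by auto
  show "S_arg f \<le> zeta f" using cf_zeta_upper[OF b] a cf_Gamma_pos by auto
qed

end

context
  fixes f :: "real \<Rightarrow> real" and r :: real
  assumes cf: "coding_function f" and r0: "0 < r" and rG: "r < Gamma_max f"
begin

private abbreviation "Lm \<equiv> {t \<in> {0..S_arg f}. f t < Gamma_max f - r}"
private abbreviation "Lp \<equiv> {t. t \<ge> S_arg f \<and> f t < Gamma_max f - r}"

private lemma Lm_ne: "0 \<in> Lm" using cf_0[OF cf] cf_S[OF cf] rG by auto
private lemma Lm_bdd: "bdd_above Lm" by (rule bdd_aboveI[of _ "S_arg f"]) auto

lemma sm_upper: "0 \<le> t \<Longrightarrow> t \<le> S_arg f \<Longrightarrow> f t < Gamma_max f - r \<Longrightarrow> t \<le> sigma_minus r f"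
  unfolding sigma_minus_def by (rule cSup_upper) (use Lm_bdd in auto)

lemma sm_least: "(\<And>t. 0 \<le> t \<Longrightarrow> t \<le> S_arg f \<Longrightarrow> f t < Gamma_max f - r \<Longrightarrow> t \<le> B) \<Longrightarrow> sigma_minus r f \<le> B"
  unfolding sigma_minus_def by (rule cSup_least) (use Lm_ne in auto)

lemma sm_nonneg: "0 \<le> sigma_minus r f"
  using sm_upper[of 0] cf_0[OF cf] cf_S[OF cf] rG by auto

lemma sm_le_S: "sigma_minus r f \<le> S_arg f"
  by (rule sm_least) auto

lemma sm_approx: "e > 0 \<Longrightarrow> \<exists>t. 0 \<le> t \<and> t \<le> S_arg f \<and> f t < Gamma_max f - r \<and> sigma_minus r f - e < t"
proof -
  assume "e > 0"
  moreover have "sigma_minus r f = Sup Lm" unfolding sigma_minus_def by (rule refl)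
  ultimately have "sigma_minus r f - e < Sup Lm" by linarith
  moreover have ne: "Lm \<noteq> {}" using Lm_ne by blast
  ultimately obtain t where t: "t \<in> Lm" "sigma_minus r f - e < t" using less_cSupD[OF ne] by blast
  from t(1) have "0 \<le> t \<and> t \<le> S_arg f \<and> f t < Gamma_max f - r" by simp
  with t(2) show ?thesis by blast
qed

lemma sm_val: "f (sigma_minus r f) \<le> Gamma_max f - r"
proof (rule ccontr)
  assume "\<not> ?thesis"
  then have gt: "f (sigma_minus r f) > Gamma_max f - r" by simp
  obtain d where d: "d > 0" "\<forall>t\<ge>0. \<bar>t - sigma_minus r f\<bar> < d \<longrightarrow> f t > Gamma_max f - r"
    using cont_above[OF cf_cont[OF cf] sm_nonneg gt] by blast
  have "sigma_minus r f \<le> sigma_minus r f - d"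
  proof (rule sm_least)
    fix t assume t: "0 \<le> t" "t \<le> S_arg f" "f t < Gamma_max f - r"
    have le: "t \<le> sigma_minus r f" using sm_upper[OF t] .
    show "t \<le> sigma_minus r f - d"
    proof (rule ccontr)
      assume "\<not> t \<le> sigma_minus r f - d"
      then have "\<bar>t - sigma_minus r f\<bar> < d" using le by linarith
      then have "f t > Gamma_max f - r" using d(2) t(1) by blast
      then show False using t(3) by linarith
    qed
  qed
  then show False using d(1) by linarith
qed

lemma sm_lt_S: "sigma_minus r f < S_arg f"
  proof -
  have "sigma_minus r f \<noteq> S_arg f" using sm_val cf_S(1)[OF cf] r0 by auto
  then show ?thesis using sm_le_S by auto
qed

private lemma Lp_ne: "zeta f + 1 \<in> Lp"
  using cf_S[OF cf] cf_zero_beyond[OF cf, of "zeta f + 1"] rG by auto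

lemma sp_lower: "S_arg f \<le> t \<Longrightarrow> f t < Gamma_max f - r \<Longrightarrow> sigma_plus r f \<le> t"
  unfolding sigma_plus_def by (rule cInf_lower) (auto intro: bdd_belowI[of _ "S_arg f"])

lemma sp_greatest: "(\<And>t. S_arg f \<le> t \<Longrightarrow> f t < Gamma_max f - r \<Longrightarrow> B \<le> t) \<Longrightarrow> B \<le> sigma_plus r f"
  unfolding sigma_plus_def by (rule cInf_greatest) (use Lp_ne in auto)

lemma S_le_sp: "S_arg f \<le> sigma_plus r f"
  by (rule sp_greatest) auto

lemma sp_approx: "e > 0 \<Longrightarrow> \<exists>t. S_arg f \<le> t \<and> f t < Gamma_max f - r \<and> t < sigma_plus r f + e"
proof -
  assume "e > 0"
  moreover have "sigma_plus r f = Inf Lp" unfolding sigma_plus_def by (rule refl)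
  ultimately have "Inf Lp < sigma_plus r f + e" by linarith
  moreover have ne: "Lp \<noteq> {}" using Lp_ne by blast
  ultimately obtain t where t: "t \<in> Lp" "t < sigma_plus r f + e" using cInf_lessD[OF ne] by blast
  from t(1) have "S_arg f \<le> t \<and> f t < Gamma_max f - r" by simp
  with t(2) show ?thesis by blast
qed

lemma sp_val: "f (sigma_plus r f) \<le> Gamma_max f - r"
proof (rule ccontr)
  assume "\<not> ?thesis"
  then have gt: "f (sigma_plus r f) > Gamma_max f - r" by simp
  have nn: "sigma_plus r f \<ge> 0" using S_le_sp cf_S(2)[OF cf] by linarith
  obtain d where d: "d > 0" "\<forall>t\<ge>0. \<bar>t - sigma_plus r f\<bar> < d \<longrightarrow> f t > Gamma_max f - r"
    using cont_above[OF cf_cont[OF cf] nn gt] by blast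
  have "sigma_plus r f + d \<le> sigma_plus r f"
  proof (rule sp_greatest)
    fix t assume t: "S_arg f \<le> t" "f t < Gamma_max f - r"
    have le: "sigma_plus r f \<le> t" using sp_lower[OF t] .
    show "sigma_plus r f + d \<le> t"
    proof (rule ccontr)
      assume "\<not> sigma_plus r f + d \<le> t"
      then have "\<bar>t - sigma_plus r f\<bar> < d" using le by linarith
      moreover have "t \<ge> 0" using le nn by linarith
      ultimately have "f t > Gamma_max f - r" using d(2) by blast
      then show False using t(2) by linarith
    qed
  qed
  then show False using d(1) by linarith
qed

lemma S_lt_sp: "S_arg f < sigma_plus r f"
  proof -
  have "sigma_plus r f \<noteq> S_arg f" using sp_val cf_S(1)[OF cf] r0 by auto
  then show ?thesis using S_le_sp by auto
qed

end


theorem lemma4p2: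
  fixes H :: "real \<Rightarrow> real" and Hp :: "nat \<Rightarrow> real \<Rightarrow> real"
    and r :: real and rp :: "nat \<Rightarrow> real"
  assumes cH: "coding_function H"
    and cHp: "\<And>p. coding_function (Hp p)"
    and r_pos: "0 < r" and r_lt: "r < Gamma_max H"
    and rp_pos: "\<And>p. 0 < rp p" and rp_lt: "\<And>p. rp p < Gamma_max (Hp p)"
    and uniq_max: "{s. s \<ge> 0 \<and> H s = Gamma_max H} = {S_arg H}"
    and above: "\<And>s. s \<in> {sigma_minus r H <..< sigma_plus r H} \<Longrightarrow> H s > Gamma_max H - r"
    and conv_H: "\<And>T. uniform_limit {0..T} Hp H sequentially"
    and conv_zeta: "(\<lambda>p. zeta (Hp p)) \<longlonglongrightarrow> zeta H"
    and conv_r: "rp \<longlonglongrightarrow> r"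
  shows "((\<lambda>p. S_arg (Hp p)) \<longlonglongrightarrow> S_arg H)
    \<and> ((\<lambda>p. sigma_minus (rp p) (Hp p)) \<longlonglongrightarrow> sigma_minus r H)
    \<and> ((\<lambda>p. sigma_plus (rp p) (Hp p)) \<longlonglongrightarrow> sigma_plus r H)
    \<and> (\<forall>T. uniform_limit {0..T} (\<lambda>p. Theta (rp p) (Hp p)) (Theta r H) sequentially)
    \<and> ((\<lambda>p. zeta (Theta (rp p) (Hp p))) \<longlonglongrightarrow> zeta (Theta r H))"
proof -
  define G where "G = Gamma_max H"
  define S where "S = S_arg H"
  define sm where "sm = sigma_minus r H"
  define sp where "sp = sigma_plus r H"
  define Gp where "Gp p = Gamma_max (Hp p)" for p
  define Sp where "Sp p = S_arg (Hp p)" for p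
  define smp where "smp p = sigma_minus (rp p) (Hp p)" for p
  define spp where "spp p = sigma_plus (rp p) (Hp p)" for p
  define Z where "Z = zeta H + 1"
  have contH: "continuous_on {0..} H" using cf_cont[OF cH] .
  have HS: "H S = G" "0 \<le> S" "S \<le> zeta H" using cf_S[OF cH] unfolding S_def G_def by auto
  have Hle: "\<And>t. t \<ge> 0 \<Longrightarrow> H t \<le> G" using cf_Gamma_upper[OF cH] G_def by auto
  have uniq: "\<And>t. t \<ge> 0 \<Longrightarrow> H t = G \<Longrightarrow> t = S" using uniq_max unfolding G_def S_def by auto
  have smS: "0 \<le> sm" "sm < S" "S < sp"
    using sm_nonneg[OF cH r_pos r_lt] sm_lt_S[OF cH r_pos r_lt] S_lt_sp[OF cH r_pos r_lt]
    unfolding sm_def S_def sp_def by auto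
  have above': "\<And>s. sm < s \<Longrightarrow> s < sp \<Longrightarrow> H s > G - r"
    using above unfolding sm_def sp_def G_def by auto
  have Hpp: "\<And>p. Hp p (Sp p) = Gp p" "\<And>p. 0 \<le> Sp p" "\<And>p. Sp p \<le> zeta (Hp p)"
    using cf_S[OF cHp] unfolding Sp_def Gp_def by auto
  have Hple: "\<And>p t. t \<ge> 0 \<Longrightarrow> Hp p t \<le> Gp p" using cf_Gamma_upper[OF cHp] Gp_def by auto
  have ptw: "\<And>t. t \<ge> 0 \<Longrightarrow> (\<lambda>p. Hp p t) \<longlonglongrightarrow> H t"
    by (rule tendsto_uniform_limitI[OF conv_H]) auto
  have unif: "\<And>T e. e > 0 \<Longrightarrow> eventually (\<lambda>p. \<forall>t\<in>{0..T}. \<bar>Hp p t - H t\<bar> < e) sequentially"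
    using conv_H unfolding uniform_limit_iff dist_real_def by blast
  have evZ: "eventually (\<lambda>p. zeta (Hp p) < Z) sequentially"
    using order_tendstoD(2)[OF conv_zeta] Z_def by auto
  have evr: "\<And>e. e > 0 \<Longrightarrow> eventually (\<lambda>p. \<bar>rp p - r\<bar> < e) sequentially"
    using conv_r unfolding tendsto_iff dist_real_def by blast

  have evG: "eventually (\<lambda>p. \<bar>Gp p - G\<bar> < e) sequentially" if e: "e > 0" for e
  proof -
    have "eventually (\<lambda>p. zeta (Hp p) < Z \<and> (\<forall>t\<in>{0..Z}. \<bar>Hp p t - H t\<bar> < e/2)) sequentially"
      using eventually_conj[OF evZ unif[of "e/2" Z]] e by simp
    then show ?thesis
    proof eventually_elim
      case (elim p)
      obtain m where m: "0 \<le> m" "m \<le> zeta (Hp p)" "Hp p m = Gamma_max (Hp p)"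
        using cf_Gamma_ex[OF cHp[of p]] by blast
      have mG: "Hp p m = Gp p" using m(3) unfolding Gp_def by simp
      have mZ: "m \<in> {0..Z}" using m elim by auto
      have SZ: "S \<in> {0..Z}" using HS Z_def by auto
      have 1: "\<bar>Hp p m - H m\<bar> < e/2" using elim mZ by blast
      have 2: "\<bar>Hp p S - H S\<bar> < e/2" using elim SZ by blast
      have 3: "H m \<le> G" using Hle m(1) by blast
      have 4: "Hp p S \<le> Gp p" using Hple HS(2) by blast
      show ?case using 1 2 3 4 mG HS(1) by linarith
    qed
  qed
  have convG: "Gp \<longlonglongrightarrow> G" unfolding tendsto_iff dist_real_def using evG by blast
  have evGr: "eventually (\<lambda>p. \<bar>(Gp p - rp p) - (G - r)\<bar> < e) sequentially" if "e > 0" for e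
  proof -
    have "eventually (\<lambda>p. \<bar>Gp p - G\<bar> < e/2 \<and> \<bar>rp p - r\<bar> < e/2) sequentially"
      using eventually_conj[OF evG[of "e/2"] evr[of "e/2"]] that by simp
    then show ?thesis by eventually_elim arith
  qed

  have convS: "Sp \<longlonglongrightarrow> S"
    unfolding tendsto_iff dist_real_def
  proof (intro allI impI)
    fix e :: real assume e: "e > 0"
    define K where "K = {0..Z} \<inter> ({..S-e} \<union> {S+e..})"
    have cK: "compact K" unfolding K_def by (intro compact_Int_closed closed_Un) auto
    have Kc: "continuous_on K (\<lambda>t. G - H t)"
      by (intro continuous_intros continuous_on_subset[OF contH]) (auto simp: K_def)
    have Kpos: "\<forall>t\<in>K. G - H t > 0"
    proof
      fix t assume t: "t \<in> K"
      then have "t \<ge> 0" "t \<noteq> S" using e by (auto simp: K_def)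
      then show "G - H t > 0" using Hle uniq by force
    qed
    obtain d where d: "d > 0" "\<forall>t\<in>K. G - H t \<ge> d"
      using gap_lemma[OF cK Kc Kpos] by auto
    have "eventually (\<lambda>p. zeta (Hp p) < Z \<and> (\<forall>t\<in>{0..Z}. \<bar>Hp p t - H t\<bar> < d/2) \<and> \<bar>Gp p - G\<bar> < d/2) sequentially"
      using eventually_conj[OF evZ eventually_conj[OF unif[of "d/2" Z] evG[of "d/2"]]] d by simp
    then show "eventually (\<lambda>p. \<bar>Sp p - S\<bar> < e) sequentially"
    proof eventually_elim
      case (elim p)
      show ?case
      proof (rule ccontr)
        assume "\<not> \<bar>Sp p - S\<bar> < e"
        then have "Sp p \<in> K" using Hpp[of p] elim by (auto simp: K_def)
        then have "G - H (Sp p) \<ge> d" using d by auto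
        moreover have "Sp p \<in> {0..Z}" using elim Hpp[of p] by auto
        then have "\<bar>Hp p (Sp p) - H (Sp p)\<bar> < d/2" using elim by blast
        moreover have "\<bar>Gp p - G\<bar> < d/2" using elim by blast
        ultimately show False using Hpp(1)[of p] by arith
      qed
    qed
  qed

  have smp_upper: "\<And>p t. 0 \<le> t \<Longrightarrow> t \<le> Sp p \<Longrightarrow> Hp p t < Gp p - rp p \<Longrightarrow> t \<le> smp p"
    using sm_upper[OF cHp rp_pos rp_lt] unfolding smp_def Sp_def Gp_def by blast
  have smp_least: "\<And>p B. (\<And>t. 0 \<le> t \<Longrightarrow> t \<le> Sp p \<Longrightarrow> Hp p t < Gp p - rp p \<Longrightarrow> t \<le> B) \<Longrightarrow> smp p \<le> B"
    using sm_least[OF cHp rp_pos rp_lt] unfolding smp_def Sp_def Gp_def by blast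
  have spp_lower: "\<And>p t. Sp p \<le> t \<Longrightarrow> Hp p t < Gp p - rp p \<Longrightarrow> spp p \<le> t"
    using sp_lower[OF cHp rp_pos rp_lt] unfolding spp_def Sp_def Gp_def by blast
  have spp_greatest: "\<And>p B. (\<And>t. Sp p \<le> t \<Longrightarrow> Hp p t < Gp p - rp p \<Longrightarrow> B \<le> t) \<Longrightarrow> B \<le> spp p"
    using sp_greatest[OF cHp rp_pos rp_lt] unfolding spp_def Sp_def Gp_def by blast
  have smp_nn: "\<And>p. 0 \<le> smp p" using sm_nonneg[OF cHp rp_pos rp_lt] unfolding smp_def by blast
  have smp_le: "\<And>p. smp p \<le> Sp p" using sm_le_S[OF cHp rp_pos rp_lt] unfolding smp_def Sp_def by blast
  have Sp_le: "\<And>p. Sp p \<le> spp p" using S_le_sp[OF cHp rp_pos rp_lt] unfolding spp_def Sp_def by blast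
  have spp_val: "\<And>p. Hp p (spp p) \<le> Gp p - rp p" using sp_val[OF cHp rp_pos rp_lt] unfolding spp_def Gp_def by blast
  have sp_valH: "H sp \<le> G - r" using sp_val[OF cH r_pos r_lt] unfolding sp_def G_def by blast

  have Kgap: "\<exists>d>0. \<forall>t. sm + e1 \<le> t \<and> t \<le> sp - e1 \<longrightarrow> H t \<ge> G - r + d" if e1: "e1 > 0" for e1
  proof -
    have Kc: "continuous_on {sm+e1..sp-e1} H"
      by (rule continuous_on_subset[OF contH]) (use smS e1 in auto)
    have Kp: "\<forall>t\<in>{sm+e1..sp-e1}. H t > G - r"
    proof
      fix t assume "t \<in> {sm+e1..sp-e1}"
      then have "sm < t" "t < sp" using e1 by auto
      then show "H t > G - r" by (rule above')
    qed
    from gap_lemma[OF compact_Icc Kc Kp] show ?thesis by auto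
  qed
  have ptwG: "(\<lambda>p. Hp p t - (Gp p - rp p)) \<longlonglongrightarrow> H t - (G - r)" if "t \<ge> 0" for t
    by (intro tendsto_diff ptw that convG conv_r)

  have convSm: "smp \<longlonglongrightarrow> sm"
  proof (rule tendsto_from_bounds)
    fix e :: real assume e: "e > 0"
    obtain t where t: "0 \<le> t" "t \<le> S" "H t < G - r" "sm - e < t"
      using sm_approx[OF cH r_pos r_lt e] unfolding sm_def S_def G_def by blast
    have "t \<le> sm" using sm_upper[OF cH r_pos r_lt t(1)] t(2,3) unfolding sm_def S_def G_def by blast
    then have tS: "t < S" using smS by linarith
    have ev1: "eventually (\<lambda>p. t < Sp p) sequentially" using order_tendstoD(1)[OF convS tS] .
    have ev2: "eventually (\<lambda>p. Hp p t - (Gp p - rp p) < 0) sequentially"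
      using order_tendstoD(2)[OF ptwG[OF t(1)], of 0] t(3) by linarith
    from eventually_conj[OF ev1 ev2] show "eventually (\<lambda>p. sm - e < smp p) sequentially"
    proof eventually_elim
      case (elim p)
      then have "t \<le> smp p" using smp_upper[of t p] t(1) by simp
      then show ?case using t(4) by linarith
    qed
  next
    fix e :: real assume e: "e > 0"
    define e1 where "e1 = min (e/2) ((sp - S)/2)"
    have e1: "e1 > 0" "e1 < e" "S < sp - e1" using e smS unfolding e1_def min_def by (auto simp: field_simps)
    obtain d where d: "d > 0" "\<forall>t. sm + e1 \<le> t \<and> t \<le> sp - e1 \<longrightarrow> H t \<ge> G - r + d"
      using Kgap[OF e1(1)] by blast
    have ev1: "eventually (\<lambda>p. Sp p < sp - e1) sequentially" using order_tendstoD(2)[OF convS e1(3)] .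
    have ev2: "eventually (\<lambda>p. \<forall>t\<in>{0..sp}. \<bar>Hp p t - H t\<bar> < d/2) sequentially" by (rule unif) (simp add: d(1))
    have ev3: "eventually (\<lambda>p. \<bar>(Gp p - rp p) - (G - r)\<bar> < d/2) sequentially" by (rule evGr) (simp add: d(1))
    from eventually_conj[OF ev1 eventually_conj[OF ev2 ev3]]
    show "eventually (\<lambda>p. smp p < sm + e) sequentially"
    proof eventually_elim
      case (elim p)
      have "smp p \<le> sm + e1"
      proof (rule smp_least)
        fix t assume t: "0 \<le> t" "t \<le> Sp p" "Hp p t < Gp p - rp p"
        show "t \<le> sm + e1"
        proof (rule ccontr)
          assume "\<not> t \<le> sm + e1"
          then have tK: "sm + e1 \<le> t \<and> t \<le> sp - e1" using t elim by auto
          then have 1: "H t \<ge> G - r + d" using d(2) by blast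
          have "t \<in> {0..sp}" using tK t(1) e1 by auto
          then have 2: "\<bar>Hp p t - H t\<bar> < d/2" using elim by blast
          have 3: "\<bar>(Gp p - rp p) - (G - r)\<bar> < d/2" using elim by blast
          show False using 1 2 3 t(3) by arith
        qed
      qed
      then show ?case using e1 by linarith
    qed
  qed

  have convSp: "spp \<longlonglongrightarrow> sp"
  proof (rule tendsto_from_bounds)
    fix e :: real assume e: "e > 0"
    define e1 where "e1 = min (e/2) ((S - sm)/2)"
    have e1: "e1 > 0" "e1 < e" "sm + e1 < S" using e smS unfolding e1_def min_def by (auto simp: field_simps)
    obtain d where d: "d > 0" "\<forall>t. sm + e1 \<le> t \<and> t \<le> sp - e1 \<longrightarrow> H t \<ge> G - r + d"
      using Kgap[OF e1(1)] by blast
    have ev1: "eventually (\<lambda>p. sm + e1 < Sp p) sequentially" using order_tendstoD(1)[OF convS e1(3)] .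
    have ev2: "eventually (\<lambda>p. \<forall>t\<in>{0..sp}. \<bar>Hp p t - H t\<bar> < d/2) sequentially" by (rule unif) (simp add: d(1))
    have ev3: "eventually (\<lambda>p. \<bar>(Gp p - rp p) - (G - r)\<bar> < d/2) sequentially" by (rule evGr) (simp add: d(1))
    from eventually_conj[OF ev1 eventually_conj[OF ev2 ev3]]
    show "eventually (\<lambda>p. sp - e < spp p) sequentially"
    proof eventually_elim
      case (elim p)
      have "sp - e1 \<le> spp p"
      proof (rule spp_greatest)
        fix t assume t: "Sp p \<le> t" "Hp p t < Gp p - rp p"
        show "sp - e1 \<le> t"
        proof (rule ccontr)
          assume "\<not> sp - e1 \<le> t"
          then have tK: "sm + e1 \<le> t \<and> t \<le> sp - e1" using t elim by auto
          then have 1: "H t \<ge> G - r + d" using d(2) by blast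
          have "t \<in> {0..sp}" using tK smS e1 by auto
          then have 2: "\<bar>Hp p t - H t\<bar> < d/2" using elim by blast
          have 3: "\<bar>(Gp p - rp p) - (G - r)\<bar> < d/2" using elim by blast
          show False using 1 2 3 t(2) by arith
        qed
      qed
      then show ?case using e1 by linarith
    qed
  next
    fix e :: real assume e: "e > 0"
    obtain t where t: "S \<le> t" "H t < G - r" "t < sp + e"
      using sp_approx[OF cH r_pos r_lt e] unfolding sp_def S_def G_def by blast
    have "t \<noteq> S" using t(2) HS(1) r_pos by auto
    then have tS: "S < t" using t(1) by linarith
    have t0: "t \<ge> 0" using tS HS by linarith
    have ev1: "eventually (\<lambda>p. Sp p < t) sequentially" using order_tendstoD(2)[OF convS tS] .
    have ev2: "eventually (\<lambda>p. Hp p t - (Gp p - rp p) < 0) sequentially"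
      using order_tendstoD(2)[OF ptwG[OF t0], of 0] t(2) by linarith
    from eventually_conj[OF ev1 ev2] show "eventually (\<lambda>p. spp p < sp + e) sequentially"
    proof eventually_elim
      case (elim p)
      then have "spp p \<le> t" using spp_lower[of p t] by simp
      then show ?case using t(3) by linarith
    qed
  qed

  have ThH: "\<And>t. Theta r H t = H (min (sm + t) sp) - G + r"
    unfolding Theta_def sm_def sp_def G_def by simp
  have ThHp: "\<And>p t. Theta (rp p) (Hp p) t = Hp p (min (smp p + t) (spp p)) - Gp p + rp p"
    unfolding Theta_def smp_def spp_def Gp_def by simp
  have unifTh: "uniform_limit {0..T} (\<lambda>p. Theta (rp p) (Hp p)) (Theta r H) sequentially" for T
    unfolding uniform_limit_iff dist_real_def
  proof (intro allI impI)
    fix e :: real assume e: "e > 0"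
    define B where "B = sp + 1"
    have uc: "uniformly_continuous_on {0..B} H"
      by (rule compact_uniformly_continuous[OF continuous_on_subset[OF contH] compact_Icc]) auto
    have e3: "e/3 > 0" using e by simp
    have "\<exists>d>0. \<forall>x\<in>{0..B}. \<forall>x'\<in>{0..B}. dist x' x < d \<longrightarrow> dist (H x') (H x) < e/3"
      using uc[unfolded uniformly_continuous_on_def, rule_format, OF e3] .
    then obtain d where d: "d > 0" "\<forall>x\<in>{0..B}. \<forall>x'\<in>{0..B}. dist x' x < d \<longrightarrow> dist (H x') (H x) < e/3"
      by blast
    define d1 where "d1 = min (d/2) 1"
    have d1: "d1 > 0" "d1 \<le> d/2" "d1 \<le> 1" using d unfolding d1_def by auto
    have ev1: "eventually (\<lambda>p. \<bar>smp p - sm\<bar> < d1) sequentially"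
      using convSm d1(1) unfolding tendsto_iff dist_real_def by blast
    have ev2: "eventually (\<lambda>p. \<bar>spp p - sp\<bar> < d1) sequentially"
      using convSp d1(1) unfolding tendsto_iff dist_real_def by blast
    have ev3: "eventually (\<lambda>p. \<forall>t\<in>{0..B}. \<bar>Hp p t - H t\<bar> < e/3) sequentially"
      by (rule unif) (simp add: e)
    have ev4: "eventually (\<lambda>p. \<bar>(Gp p - rp p) - (G - r)\<bar> < e/3) sequentially"
      by (rule evGr) (simp add: e)
    from eventually_conj[OF ev1 eventually_conj[OF ev2 eventually_conj[OF ev3 ev4]]]
    show "eventually (\<lambda>p. \<forall>t\<in>{0..T}. \<bar>Theta (rp p) (Hp p) t - Theta r H t\<bar> < e) sequentially"
    proof eventually_elim
      case (elim p)
      show ?case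
      proof
        fix t assume t: "t \<in> {0..T}"
        define a where "a = min (smp p + t) (spp p)"
        define b where "b = min (sm + t) sp"
        have s1: "\<bar>smp p - sm\<bar> < d1" "\<bar>spp p - sp\<bar> < d1" using elim by blast+
        then have s2: "smp p - sm < d1" "sm - smp p < d1" "spp p - sp < d1" "sp - spp p < d1"
          by (auto simp: abs_less_iff)
        have spp0: "spp p \<ge> 0" using Sp_le[of p] Hpp(2)[of p] by linarith
        have sppB: "spp p \<le> B" using s2(3) d1(3) unfolding B_def by linarith
        have aB: "a \<in> {0..B}" using t smp_nn[of p] spp0 sppB unfolding a_def by auto
        have bB: "b \<in> {0..B}" using t smS unfolding b_def B_def by auto
        have a1: "a \<le> smp p + t" "a \<le> spp p" "a = smp p + t \<or> a = spp p" unfolding a_def by auto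
        have b1: "b \<le> sm + t" "b \<le> sp" "b = sm + t \<or> b = sp" unfolding b_def by auto
        have "a - b < d1" using a1(1,2) b1(3) s2 by auto
        moreover have "b - a < d1" using b1(1,2) a1(3) s2 by auto
        ultimately have ab: "\<bar>a - b\<bar> < d" using d1(2) d(1) by (auto simp: abs_less_iff)
        have 1: "\<bar>H a - H b\<bar> < e/3" using d(2) aB bB ab by (auto simp: dist_real_def)
        have 2: "\<bar>Hp p a - H a\<bar> < e/3" using elim aB by blast
        have 3: "\<bar>(Gp p - rp p) - (G - r)\<bar> < e/3" using elim by blast
        show "\<bar>Theta (rp p) (Hp p) t - Theta r H t\<bar> < e"
          unfolding ThH ThHp a_def[symmetric] b_def[symmetric] using 1 2 3 by arith
      qed
    qed
  qed

  have zH: "zeta (Theta r H) = sp - sm"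
    unfolding zeta_def
  proof (rule cSup_eq_non_empty)
    have "(sp - sm)/2 \<ge> 0" "Theta r H ((sp - sm)/2) > 0"
    proof -
      show "(sp - sm)/2 \<ge> 0" using smS by auto
      have "min (sm + (sp - sm)/2) sp = sm + (sp - sm)/2" using smS by (auto simp: min_def field_simps)
      moreover have "H (sm + (sp - sm)/2) > G - r" by (rule above') (use smS in \<open>auto simp: field_simps\<close>)
      ultimately show "Theta r H ((sp - sm)/2) > 0" unfolding ThH by simp
    qed
    then show "{t. 0 \<le> t \<and> 0 < Theta r H t} \<noteq> {}" by blast
  next
    fix x assume "x \<in> {t. 0 \<le> t \<and> 0 < Theta r H t}"
    then have x: "0 \<le> x" "0 < Theta r H x" by auto
    show "x \<le> sp - sm"
    proof (rule ccontr)
      assume "\<not> x \<le> sp - sm"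
      then have "min (sm + x) sp = sp" by auto
      then show False using x(2) sp_valH unfolding ThH by simp
    qed
  next
    fix y assume y: "\<And>x. x \<in> {t. 0 \<le> t \<and> 0 < Theta r H t} \<Longrightarrow> x \<le> y"
    show "sp - sm \<le> y"
    proof (rule ccontr)
      assume ny: "\<not> sp - sm \<le> y"
      define y0 where "y0 = max y 0"
      define x where "x = (y0 + (sp - sm)) / 2"
      have y0: "y0 < sp - sm" "y \<le> y0" "0 \<le> y0" using ny smS unfolding y0_def by auto
      have x: "y0 < x" "x < sp - sm" using y0 unfolding x_def by (auto simp: field_simps)
      have "min (sm + x) sp = sm + x" using x by auto
      moreover have "H (sm + x) > G - r" by (rule above') (use x y0 in auto)
      ultimately have "Theta r H x > 0" unfolding ThH by simp
      then have "x \<le> y" using y x y0 by auto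
      then show False using x y0 by auto
    qed
  qed

  have convZ: "(\<lambda>p. zeta (Theta (rp p) (Hp p))) \<longlonglongrightarrow> sp - sm"
  proof -
    define Tp where "Tp p = {t. 0 \<le> t \<and> 0 < Theta (rp p) (Hp p) t}" for p
    have Tp_bd: "t < spp p - smp p" if "t \<in> Tp p" for p t
    proof (rule ccontr)
      assume "\<not> t < spp p - smp p"
      then have "min (smp p + t) (spp p) = spp p" by auto
      then show False using that spp_val[of p] unfolding Tp_def ThHp by simp
    qed
    have Tp_ne: "Sp p - smp p \<in> Tp p" for p
    proof -
      have "min (smp p + (Sp p - smp p)) (spp p) = Sp p" using Sp_le[of p] by auto
      then show ?thesis using smp_le[of p] Hpp(1)[of p] rp_pos[of p] unfolding Tp_def ThHp by simp
    qed
    have zp: "zeta (Theta (rp p) (Hp p)) = Sup (Tp p)" for p unfolding zeta_def Tp_def by simp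
    have zle: "zeta (Theta (rp p) (Hp p)) \<le> spp p - smp p" for p
      unfolding zp by (rule cSup_least) (use Tp_ne Tp_bd in \<open>auto intro: less_imp_le\<close>)
    have zge: "t \<le> zeta (Theta (rp p) (Hp p))" if "t \<in> Tp p" for p t
      unfolding zp by (rule cSup_upper[OF that]) (use Tp_bd in \<open>auto intro!: bdd_aboveI[of _ "spp p - smp p"] less_imp_le\<close>)
    have convD: "(\<lambda>p. spp p - smp p) \<longlonglongrightarrow> sp - sm" by (intro tendsto_diff convSp convSm)
    show ?thesis
    proof (rule tendsto_from_bounds)
      fix e :: real assume e: "e > 0"
      have "eventually (\<lambda>p. spp p - smp p < sp - sm + e) sequentially"
        using order_tendstoD(2)[OF convD] e by simp
      then show "eventually (\<lambda>p. zeta (Theta (rp p) (Hp p)) < sp - sm + e) sequentially"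
      proof eventually_elim
        case (elim p)
        then show ?case using zle[of p] by linarith
      qed
    next
      fix e :: real assume e: "e > 0"
      define e1 where "e1 = min (e/3) ((sp - sm)/2)"
      have e1: "e1 > 0" "e1 \<le> e/3" "sm + e1 \<le> sp - e1" using e smS unfolding e1_def min_def by (auto simp: field_simps)
      define u where "u = sp - e1"
      obtain d where d: "d > 0" "\<forall>t. sm + e1 \<le> t \<and> t \<le> sp - e1 \<longrightarrow> H t \<ge> G - r + d"
        using Kgap[OF e1(1)] by blast
      have Hu: "H u \<ge> G - r + d" using d(2) e1 unfolding u_def by auto
      have u0: "u \<ge> 0" using e1 smS unfolding u_def by linarith
      have ev1: "eventually (\<lambda>p. u < spp p) sequentially"
        using order_tendstoD(1)[OF convSp] e1 unfolding u_def by simp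
      have ev2: "eventually (\<lambda>p. \<bar>smp p - sm\<bar> < e1) sequentially"
        using convSm e1(1) unfolding tendsto_iff dist_real_def by blast
      have ev3: "eventually (\<lambda>p. \<forall>t\<in>{0..u}. \<bar>Hp p t - H t\<bar> < d/2) sequentially"
        by (rule unif) (simp add: d(1))
      have ev4: "eventually (\<lambda>p. \<bar>(Gp p - rp p) - (G - r)\<bar> < d/2) sequentially"
        by (rule evGr) (simp add: d(1))
      from eventually_conj[OF ev1 eventually_conj[OF ev2 eventually_conj[OF ev3 ev4]]]
      show "eventually (\<lambda>p. sp - sm - e < zeta (Theta (rp p) (Hp p))) sequentially"
      proof eventually_elim
        case (elim p)
        have sm1: "\<bar>smp p - sm\<bar> < e1" using elim by blast
        have "\<bar>Hp p u - H u\<bar> < d/2" using elim u0 by auto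
        moreover have "\<bar>(Gp p - rp p) - (G - r)\<bar> < d/2" using elim by blast
        ultimately have Hpu: "Hp p u > Gp p - rp p" using Hu by arith
        have mn: "min u (spp p) = u" using elim by auto
        have "u - smp p \<ge> 0" using sm1 e1 unfolding u_def by arith
        then have "u - smp p \<in> Tp p" unfolding Tp_def ThHp using Hpu mn by simp
        then have "u - smp p \<le> zeta (Theta (rp p) (Hp p))" by (rule zge)
        moreover have "sp - sm - e < u - smp p" using sm1 e1 unfolding u_def by arith
        ultimately show ?case by linarith
      qed
    qed
  qed

  show ?thesis
    using convS convSm convSp unifTh convZ zH
    unfolding Sp_def S_def smp_def sm_def spp_def sp_def by simp
qed

end
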